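(* Let $k$ be even, and for $s\in\mathbb{F}_{2^{k-1}}$ let $L_s:\mathbb{F}_{2^{k-1}}\times\mathbb{F}_2\to\mathbb{F}_{2^{k-1}}\times\mathbb{F}_2$ be $L_s(x,\alpha)=(s^2x+s\operatorname{tr}(sx)+\alpha s,\operatorname{tr}(sx))$. Then: (i) $(x,\alpha)\cdot L_s(x,\alpha)=0$ for all $s,x\in\mathbb{F}_{2^{k-1}}$, $\alpha\in\mathbb{F}_2$; (ii) $(x,\alpha)\cdot L_s(y,\beta)=L_s(x,\alpha)\cdot(y,\beta)$ for all $s,x,y$, $\alpha,\beta$; (iii) if $r\neq s$ and $L_r(x,\alpha)=L_s(x,\alpha)$, then $(x,\alpha)=(0,0)$.
   Context: $\operatorname{tr}:\mathbb{F}_{2^{k-1}}\to\mathbb{F}_2$ is the field trace, and the bilinear form on $\mathbb{F}_{2^{k-1}}\times\mathbb{F}_2$ is $(x,\alpha)\cdot(y,\beta)=\operatorname{tr}(xy)+\alpha\beta$. *)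

theory Defs
  imports Main
begin

text \<open>The field F_{2^m} is modelled as a finite field type 'a with CARD('a) = 2^m;
  F_2 is its prime subfield {0,1}.  The absolute trace F_{2^m} -> F_2:\<close>
definition tr :: "nat \<Rightarrow> 'a::field \<Rightarrow> 'a" where
  "tr m x = (\<Sum>i<m. x ^ (2 ^ i))"

definition bform :: "nat \<Rightarrow> 'a::field \<times> 'a \<Rightarrow> 'a \<times> 'a \<Rightarrow> 'a" where
  "bform m u v = tr m (fst u * fst v) + snd u * snd v"

definition Lmap :: "nat \<Rightarrow> 'a::field \<Rightarrow> 'a \<times> 'a \<Rightarrow> 'a \<times> 'a" where
  "Lmap m s u = (s^2 * fst u + s * tr m (s * fst u) + snd u * s, tr m (s * fst u))"

end

theory Submission
  imports Defs
begin

lemma fermat_card: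
  fixes x :: "'a :: {field,finite}"
  shows "x ^ card (UNIV :: 'a set) = x"
proof (cases "x = 0")
  case False
  have "x * (\<Prod>y\<in>UNIV-{0}. x * y) = x * x ^ (card (UNIV :: 'a set) - 1) * \<Prod>(UNIV-{0})"
    by (simp add: prod.distrib mult_ac card_Diff_subset)
  also have "x * x ^ (card (UNIV :: 'a set) - 1) = x ^ Suc (card (UNIV :: 'a set) - 1)"
    by (subst power_Suc) auto
  also have "Suc (card (UNIV :: 'a set) - 1) = card (UNIV :: 'a set)"
    using finite_UNIV_card_ge_0[where ?'a = 'a] by simp
  also have "(\<Prod>y\<in>UNIV-{0}. x * y) = (\<Prod>y\<in>UNIV-{0}. y)"
    by (rule prod.reindex_bij_witness[of _ "\<lambda>y. y / x" "\<lambda>y. x * y"]) (use False in auto)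
  finally show ?thesis
    by simp
qed (use finite_UNIV_card_ge_0[where ?'a = 'a] in auto)

locale ch2 =
  fixes m :: nat and dummy :: "'a::field itself"
  assumes two: "(1::'a) + 1 = 0"
    and frob: "\<And>x::'a. x ^ (2 ^ m) = x"
    and oddm: "odd m"
begin

lemma add_self: "(x::'a) + x = 0"
  using two by (metis distrib_left mult_1_right mult_zero_right)

lemma eq_of_sum0: "(a::'a) + b = 0 \<Longrightarrow> a = b"
proof -
  assume h: "a + b = 0"
  have "a = a + (b + b)" using add_self[of b] by simp
  also have "\<dots> = (a + b) + b" by (simp add: add.assoc)
  finally show ?thesis using h by simp
qed

lemma sq_add: "((a::'a) + b)^2 = a^2 + b^2"
proof -
  have "(a+b)^2 = a^2 + b^2 + (a*b + a*b)" by (simp add: power2_eq_square algebra_simps)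
  thus ?thesis using add_self by simp
qed

lemma pow_add: "((a::'a) + b)^(2^i) = a^(2^i) + b^(2^i)"
  by (induction i) (simp_all add: power_Suc power_mult sq_add[symmetric] mult.commute[of 2])

lemma tr_add: "tr m ((a::'a) + b) = tr m a + tr m b"
  unfolding tr_def by (simp add: pow_add sum.distrib)

lemma sq_sum: "(sum (f::nat\<Rightarrow>'a) A)^2 = sum (\<lambda>i. (f i)^2) A"
  by (induction A rule: infinite_finite_induct) (simp_all add: sq_add)

lemma tr_sq: "tr m ((x::'a)^2) = tr m x"
proof -
  have "tr m (x^2) = (\<Sum>i<m. x ^ (2 ^ Suc i))"
    unfolding tr_def by (simp add: power_mult[symmetric] mult.commute)
  also have "\<dots> = (\<Sum>i<Suc m. x ^ (2 ^ i)) - x"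
    by (simp only: sum.lessThan_Suc_shift) simp
  also have "\<dots> = tr m x"
    unfolding tr_def using frob by simp
  finally show ?thesis .
qed

lemma tr_01: "tr m (x::'a) = 0 \<or> tr m x = 1"
proof -
  have "(tr m x)^2 = tr m x"
    using tr_sq[of x] unfolding tr_def by (simp add: sq_sum power_mult[symmetric] mult.commute)
  hence "tr m x * (tr m x - 1) = 0" by (simp add: power2_eq_square algebra_simps)
  thus ?thesis by auto
qed

lemma tr_sq_eq: "(tr m (x::'a)) * tr m x = tr m x"
  using tr_01[of x] by auto

lemma tr_zero: "tr m (0::'a) = 0"
  unfolding tr_def by (simp add: zero_power)

lemma tr_scal: "c = 0 \<or> c = 1 \<Longrightarrow> tr m ((c::'a) * y) = c * tr m y"
  using tr_zero by auto

lemma tr_one: "tr m (1::'a) = 1"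
proof -
  obtain q where q: "m = 2*q+1" using oddm oddE by blast
  have "tr m (1::'a) = of_nat m" unfolding tr_def by simp
  also have "\<dots> = of_nat q * (1+1) + 1" using q by (simp add: algebra_simps)
  finally show ?thesis using two by simp
qed

end

theorem mainTheorem9:
  fixes k :: nat
  assumes "even k"
    and "card (UNIV :: 'a::{field,finite} set) = 2 ^ (k - 1)"
  shows "(\<forall>(s::'a) x \<alpha>. \<alpha> \<in> {0, 1} \<longrightarrow>
            bform (k - 1) (x, \<alpha>) (Lmap (k - 1) s (x, \<alpha>)) = 0)
       \<and> (\<forall>(s::'a) x y \<alpha> \<beta>. \<alpha> \<in> {0, 1} \<longrightarrow> \<beta> \<in> {0, 1} \<longrightarrow>
            bform (k - 1) (x, \<alpha>) (Lmap (k - 1) s (y, \<beta>))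
              = bform (k - 1) (Lmap (k - 1) s (x, \<alpha>)) (y, \<beta>))
       \<and> (\<forall>(r::'a) s x \<alpha>. \<alpha> \<in> {0, 1} \<longrightarrow> r \<noteq> s \<longrightarrow>
            Lmap (k - 1) r (x, \<alpha>) = Lmap (k - 1) s (x, \<alpha>) \<longrightarrow> (x, \<alpha>) = (0, 0))"
proof -
  define m where "m = k - 1"
  have m1: "m \<noteq> 0"
  proof
    assume "m = 0"
    hence "card (UNIV :: 'a set) = 1" using assms(2) m_def by simp
    then obtain a where "(UNIV :: 'a set) = {a}" using card_1_singletonE by blast
    hence "(0::'a) = 1" by (metis UNIV_I singletonD)
    thus False by simp
  qed
  have oddm: "odd m" using m1 assms(1) m_def by (cases k) auto
  have fr: "\<And>x::'a. x ^ (2 ^ m) = x"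
  proof -
    fix x :: 'a
    show "x ^ (2 ^ m) = x" using fermat_card[of x] unfolding assms(2) m_def .
  qed
  have "(-1::'a) ^ (2^m) = 1" using m1 by (simp add: power_minus1_even)
  hence m1eq: "(-1::'a) = 1" using fr[of "-1"] by simp
  have two: "(1::'a) + 1 = 0"
  proof -
    have "(1::'a) + 1 = 1 + (-1)" using m1eq by simp
    thus ?thesis by simp
  qed
  interpret C: ch2 m "TYPE('a)" using two fr oddm by unfold_locales auto
  have P1: "bform m (x, \<alpha>) (Lmap m s (x, \<alpha>)) = 0" if a: "\<alpha> \<in> {0,1}" for s x \<alpha> :: 'a
  proof -
    define t where "t = tr m (s*x)"
    have t01: "t = 0 \<or> t = 1" using C.tr_01 t_def by blast
    have "x * (s\<^sup>2 * x + s * t + \<alpha> * s) = (s*x)^2 + t*(s*x) + \<alpha>*(s*x)"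
      by (simp add: power2_eq_square algebra_simps)
    hence "bform m (x, \<alpha>) (Lmap m s (x, \<alpha>)) = (t + t*t + \<alpha>*t) + \<alpha>*t"
      unfolding bform_def Lmap_def using t01 a
      by (simp add: C.tr_add C.tr_sq C.tr_scal t_def[symmetric])
    also have "\<dots> = 0" using C.add_self[of t] C.add_self[of "\<alpha>*t"] t01 by auto
    finally show ?thesis .
  qed
  have P2: "bform m (x, \<alpha>) (Lmap m s (y, \<beta>)) = bform m (Lmap m s (x, \<alpha>)) (y, \<beta>)"
    if a: "\<alpha> \<in> {0,1}" "\<beta> \<in> {0,1}" for s x y \<alpha> \<beta> :: 'a
  proof -
    define t where "t = tr m (s*x)"
    define u where "u = tr m (s*y)"
    have t01: "t = 0 \<or> t = 1" using C.tr_01 t_def by blast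
    have u01: "u = 0 \<or> u = 1" using C.tr_01 u_def by blast
    have e1: "x * (s\<^sup>2 * y + s * u + \<beta> * s) = s\<^sup>2 * x * y + u*(s*x) + \<beta>*(s*x)"
      by (simp add: power2_eq_square algebra_simps)
    have e2: "(s\<^sup>2 * x + s * t + \<alpha> * s) * y = s\<^sup>2 * x * y + t*(s*y) + \<alpha>*(s*y)"
      by (simp add: power2_eq_square algebra_simps)
    have "bform m (x, \<alpha>) (Lmap m s (y, \<beta>)) = tr m (s\<^sup>2 * x * y) + u*t + \<beta>*t + \<alpha>*u"
      unfolding bform_def Lmap_def using u01 a
      by (simp add: e1 C.tr_add C.tr_scal t_def[symmetric] u_def[symmetric])
    moreover have "bform m (Lmap m s (x, \<alpha>)) (y, \<beta>) = tr m (s\<^sup>2 * x * y) + t*u + \<alpha>*u + t*\<beta>"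
      unfolding bform_def Lmap_def using t01 a
      by (simp add: e2 C.tr_add C.tr_scal t_def[symmetric] u_def[symmetric])
    ultimately show ?thesis by (simp add: algebra_simps)
  qed
  have P3: "(x, \<alpha>) = (0, 0)"
    if a: "\<alpha> \<in> {0,1}" "r \<noteq> s" "Lmap m r (x, \<alpha>) = Lmap m s (x, \<alpha>)" for r s x \<alpha> :: 'a
  proof -
    define t where "t = tr m (s*x)"
    have tr: "tr m (r*x) = t" using a(3) unfolding Lmap_def t_def by simp
    have eq: "r\<^sup>2 * x + r * t + \<alpha> * r = s\<^sup>2 * x + s * t + \<alpha> * s"
      using a(3) tr unfolding Lmap_def t_def by simp
    define d where "d = r + s"
    have d0: "d \<noteq> 0" using a(2) C.add_self[of s] unfolding d_def
      using C.eq_of_sum0[of r s] by auto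
    have "d * (d * x + (t + \<alpha>)) = (r\<^sup>2 * x + r * t + \<alpha> * r) + (s\<^sup>2 * x + s * t + \<alpha> * s) + (r*s*x + r*s*x)"
      unfolding d_def by (simp add: power2_eq_square algebra_simps)
    also have "\<dots> = 0" by (simp only: eq C.add_self add_0)
    finally have "d * x + (t + \<alpha>) = 0" using d0 by simp
    hence dx: "d * x = t + \<alpha>" by (rule C.eq_of_sum0)
    show ?thesis
    proof (cases "x = 0")
      case True
      hence "t = 0" using t_def C.tr_zero by simp
      thus ?thesis using dx True by simp
    next
      case False
      hence "t + \<alpha> \<noteq> 0" using dx d0 by (metis mult_eq_0_iff)
      hence "t + \<alpha> = 1" using a(1) C.tr_01[of "s*x"] t_def C.two
        by (auto simp: C.add_self)
      hence xd: "x * d = 1" using dx by (simp add: mult.commute)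
      have "tr m (r*x) + tr m (s*x) = tr m (x*d)"
        unfolding d_def by (simp add: C.tr_add[symmetric] algebra_simps)
      hence "t + t = 1" using tr t_def xd C.tr_one by simp
      thus ?thesis using C.add_self by simp
    qed
  qed
  show ?thesis
    unfolding m_def[symmetric]
    apply (intro conjI allI impI)
      apply (erule P1)
     apply (erule (1) P2)
    apply (erule (2) P3)
    done
qed

end
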